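(* Let $\mathcal{H}$ be a reproducing kernel Hilbert space (RKHS) of real-valued functions on the state-action space $\mathfrak{Z} \coloneqq \mathfrak{S} \times \mathfrak{A}$ (state space $\mathfrak{S} \subset \mathbb{R}^D$, action space $\mathfrak{A}$), with inner product $\langle\cdot,\cdot\rangle_{\mathcal{H}}$, norm $\|\cdot\|_{\mathcal{H}}$, reproducing kernel $\kappa$ and feature map $\varphi(\mathbf{z}) \coloneqq \kappa(\mathbf{z},\cdot)$. Let $\mathcal{M}$ be the set of all mappings (stationary policies) $\mu \colon \mathfrak{S} \to \mathfrak{A}$, let $g \in \mathcal{H}$, $\alpha > 0$, let $\{\mathbf{s}_i^{\mathrm{av}}\}_{i=1}^{N_{\mathrm{av}}} \subset \mathfrak{S}$ be user-chosen states, and let $\{\psi_i\}_{i=1}^{N_{\mathrm{av}}} \subset \mathcal{H}$, with $\boldsymbol{\Psi} \coloneqq [\psi_1, \ldots, \psi_{N_{\mathrm{av}}}]$. For $\mu \in \mathcal{M}$ define $\boldsymbol{\Phi}_{\mu}^{\mathrm{av}} \coloneqq [\varphi(\mathbf{s}_1^{\mathrm{av}}, \mu(\mathbf{s}_1^{\mathrm{av}})), \ldots, \varphi(\mathbf{s}_{N_{\mathrm{av}}}^{\mathrm{av}}, \mu(\mathbf{s}_{N_{\mathrm{av}}}^{\mathrm{av}}))]$, and the $N_{\mathrm{av}} \times N_{\mathrm{av}}$ kernel matrices $\mathbf{K}_{\Psi} \coloneqq \boldsymbol{\Psi}^{\intercal}\boldsymbol{\Psi}$ (entries $\langle \psi_i,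 \psi_j\rangle_{\mathcal{H}}$) and $\mathbf{K}_{\mu}^{\mathrm{av}} \coloneqq \boldsymbol{\Phi}_{\mu}^{\mathrm{av}\intercal}\boldsymbol{\Phi}_{\mu}^{\mathrm{av}}$ (entries $\kappa((\mathbf{s}_i^{\mathrm{av}}, \mu(\mathbf{s}_i^{\mathrm{av}})), (\mathbf{s}_j^{\mathrm{av}}, \mu(\mathbf{s}_j^{\mathrm{av}})))$). Define the Bellman mappings $T_{\mu}, T \colon \mathcal{H} \to \mathcal{H}$ by $T_{\mu}(Q) \coloneqq g + \alpha \sum_{i=1}^{N_{\mathrm{av}}} Q(\mathbf{s}_i^{\mathrm{av}}, \mu(\mathbf{s}_i^{\mathrm{av}}))\, \psi_i = g + \alpha \boldsymbol{\Psi}\boldsymbol{\Phi}_{\mu}^{\mathrm{av}\intercal} Q$ and $T(Q) \coloneqq g + \alpha \sum_{i=1}^{N_{\mathrm{av}}} \inf_{a \in \mathfrak{A}} Q(\mathbf{s}_i^{\mathrm{av}}, a)\, \psi_i$. Then for all $Q_1, Q_2 \in \mathcal{H}$ and all $\mu \in \mathcal{M}$, $\|T_{\mu}(Q_1) - T_{\mu}(Q_2)\|_{\mathcal{H}} \leq \beta \|Q_1 - Q_2\|_{\mathcal{H}}$ and $\|T(Q_1) - T(Q_2)\|_{\mathcal{H}} \leq \beta \|Q_1 - Q_2\|_{\mathcal{H}}$, where $\beta \coloneqq \alpha \big( \|\mathbf{K}_{\Psi}\|_2 \, \sup_{\mu' \in \mathcal{M}} \|\mathbf{K}_{\mu'}^{\mathrm{av}}\|_2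 \big)^{1/2}$ and $\|\cdot\|_2$ is the spectral norm of a matrix. Hence, if $\beta = 1$ the mappings $T_{\mu}, T$ are nonexpansive, and if $\beta < 1$ they are contractions in $(\mathcal{H}, \langle\cdot,\cdot\rangle_{\mathcal{H}})$.
   Context: Setting: nonparametric Bellman mappings for reinforcement learning defined directly in an RKHS, where the one-step loss $g$ and the Q-functions belong to $\mathcal{H}$; the functions $\psi_i$ and states $\mathbf{s}_i^{\mathrm{av}}$ are user-chosen design parameters used to approximate the conditional expectation of the classical Bellman maps by sample averaging. *)

theory Defs
  imports "HOL-Analysis.Analysis"
begin

text \<open>An RKHS of real-valued functions on the state-action space 's \<times> 'a is modelled
  as a real Hilbert space 'h together with the map ev identifying each element with
  a function on 's \<times> 'a (injective, i.e. elements ARE functions) and a feature map phi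
  satisfying the reproducing property ev Q z = inner (phi z) Q.\<close>

definition is_rkhs :: "('h::real_inner \<Rightarrow> 'z \<Rightarrow> real) \<Rightarrow> ('z \<Rightarrow> 'h) \<Rightarrow> bool" where
  "is_rkhs ev phi \<longleftrightarrow> inj ev \<and> (\<forall>Q z. ev Q z = inner (phi z) Q)"

definition rkhs_kernel :: "('z \<Rightarrow> 'h::real_inner) \<Rightarrow> 'z \<Rightarrow> 'z \<Rightarrow> real" where
  "rkhs_kernel phi z z' = inner (phi z) (phi z')"

definition spec_norm :: "real^'n^'n \<Rightarrow> real" where
  "spec_norm M = onorm (\<lambda>x. M *v x)"

definition K_Psi :: "('n::finite \<Rightarrow> 'h::real_inner) \<Rightarrow> real^'n^'n" where
  "K_Psi psi = (\<chi> i j. inner (psi i) (psi j))"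

definition K_av :: "('s \<times> 'a \<Rightarrow> 'h::real_inner) \<Rightarrow> ('n::finite \<Rightarrow> 's) \<Rightarrow> ('s \<Rightarrow> 'a) \<Rightarrow> real^'n^'n" where
  "K_av phi s mu = (\<chi> i j. rkhs_kernel phi (s i, mu (s i)) (s j, mu (s j)))"

definition T_mu :: "('h::real_inner \<Rightarrow> 's \<times> 'a \<Rightarrow> real) \<Rightarrow> 'h \<Rightarrow> real \<Rightarrow> ('n::finite \<Rightarrow> 's)
     \<Rightarrow> ('n \<Rightarrow> 'h) \<Rightarrow> ('s \<Rightarrow> 'a) \<Rightarrow> 'h \<Rightarrow> 'h" where
  "T_mu ev g \<alpha> s psi mu Q = g + \<alpha> *\<^sub>R (\<Sum>i\<in>UNIV. ev Q (s i, mu (s i)) *\<^sub>R psi i)"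

definition T_bell :: "('h::real_inner \<Rightarrow> 's \<times> 'a \<Rightarrow> real) \<Rightarrow> 'h \<Rightarrow> real \<Rightarrow> ('n::finite \<Rightarrow> 's)
     \<Rightarrow> ('n \<Rightarrow> 'h) \<Rightarrow> 'h \<Rightarrow> 'h" where
  "T_bell ev g \<alpha> s psi Q = g + \<alpha> *\<^sub>R (\<Sum>i\<in>UNIV. (INF a. ev Q (s i, a)) *\<^sub>R psi i)"

text \<open>beta = alpha * (||K_Psi||_2 * sup_mu ||K_mu^av||_2)^(1/2), taken in the extended
  reals since the supremum over all policies may be infinite.  We use
  sqrt(sup) = sup(sqrt), valid as sqrt is monotone and continuous.\<close>
definition beta :: "('s \<times> 'a \<Rightarrow> 'h::real_inner) \<Rightarrow> real \<Rightarrow> ('n::finite \<Rightarrow> 's) \<Rightarrow> ('n \<Rightarrow> 'h) \<Rightarrow> ereal" where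
  "beta phi \<alpha> s psi = ereal \<alpha> * ereal (sqrt (spec_norm (K_Psi psi)))
      * (SUP mu. ereal (sqrt (spec_norm (K_av phi s mu))))"

end

theory Submission
  imports Defs
begin


lemma spec_norm_nonneg: "0 \<le> spec_norm M"
  unfolding spec_norm_def by (rule onorm_pos_le) simp

lemma spec_norm_bound: "norm (M *v x) \<le> spec_norm M * norm x"
  unfolding spec_norm_def by (rule onorm) simp

lemma sum_norm_bound:
  fixes f :: "'n::finite \<Rightarrow> 'h::real_inner" and c :: "real^'n"
  shows "norm (\<Sum>i\<in>UNIV. c$i *\<^sub>R f i) \<le> norm c * sqrt (spec_norm (\<chi> i j. inner (f i) (f j)))"
proof -
  define M :: "real^'n^'n" where "M = (\<chi> i j. inner (f i) (f j))"
  have "(norm (\<Sum>i\<in>UNIV. c$i *\<^sub>R f i))^2 = inner c (M *v c)"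
    unfolding power2_norm_eq_inner
    by (simp add: inner_sum_left inner_sum_right inner_vec_def matrix_vector_mult_def M_def
        sum_distrib_left mult_ac) (intro sum.cong refl; simp add: inner_commute)
  also have "\<dots> \<le> norm c * norm (M *v c)" by (rule norm_cauchy_schwarz)
  also have "\<dots> \<le> norm c * (spec_norm M * norm c)"
    by (rule mult_left_mono[OF spec_norm_bound]) simp
  also have "\<dots> = (norm c * sqrt (spec_norm M))^2"
    using spec_norm_nonneg[of M] by (simp add: power_mult_distrib power2_eq_square)
  finally show ?thesis unfolding M_def[symmetric]
    using spec_norm_nonneg[of M]
    by (meson norm_ge_zero power2_le_imp_le mult_nonneg_nonneg real_sqrt_ge_zero)
qed


lemma inf_choice:
  fixes f1 f2 :: "'a \<Rightarrow> real"
  assumes b1: "bdd_below (range f1)" and b2: "bdd_below (range f2)" and e: "0 < eps"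
  shows "\<exists>a. \<bar>(INF a. f1 a) - (INF a. f2 a)\<bar> \<le> \<bar>f1 a - f2 a\<bar> + eps"
proof (cases "(INF a. f2 a) \<le> (INF a. f1 a)")
  case True
  have "(INF a. f2 a) < (INF a. f2 a) + eps" using e by simp
  then obtain a where a: "f2 a < (INF a. f2 a) + eps"
    using cINF_less_iff[of UNIV f2 "(INF a. f2 a) + eps"] b2 e by auto
  have "(INF a. f1 a) \<le> f1 a" using b1 by (simp add: cINF_lower)
  then show ?thesis using a True by (intro exI[of _ a]) linarith
next
  case False
  have "(INF a. f1 a) < (INF a. f1 a) + eps" using e by simp
  then obtain a where a: "f1 a < (INF a. f1 a) + eps"
    using cINF_less_iff[of UNIV f1 "(INF a. f1 a) + eps"] b1 e by auto
  have "(INF a. f2 a) \<le> f2 a" using b2 by (simp add: cINF_lower)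
  then show ?thesis using a False by (intro exI[of _ a]) linarith
qed

lemma vmu_bound:
  fixes phi :: "'z \<Rightarrow> 'h::real_inner" and z :: "'n::finite \<Rightarrow> 'z"
  shows "norm (\<chi> i. inner (phi (z i)) Q) \<le> sqrt (spec_norm (\<chi> i j. inner (phi (z i)) (phi (z j)))) * norm Q"
proof -
  define v :: "real^'n" where "v = (\<chi> i. inner (phi (z i)) Q)"
  define S where "S = sqrt (spec_norm (\<chi> i j. inner (phi (z i)) (phi (z j))))"
  have S0: "0 \<le> S" unfolding S_def by (simp add: spec_norm_nonneg)
  have "(norm v)^2 = inner (\<Sum>i\<in>UNIV. v$i *\<^sub>R phi (z i)) Q"
    unfolding power2_norm_eq_inner
    by (simp add: inner_sum_left inner_vec_def v_def power2_eq_square)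
  also have "\<dots> \<le> norm (\<Sum>i\<in>UNIV. v$i *\<^sub>R phi (z i)) * norm Q" by (rule norm_cauchy_schwarz)
  also have "\<dots> \<le> norm v * S * norm Q"
    by (rule mult_right_mono) (use sum_norm_bound[of v "\<lambda>i. phi (z i)"] in \<open>simp_all add: S_def\<close>)
  finally have h: "norm v * norm v \<le> norm v * (S * norm Q)" by (simp add: power2_eq_square mult_ac)
  show ?thesis
  proof (cases "norm v = 0")
    case True then show ?thesis using S0 by (simp add: v_def[symmetric] S_def[symmetric])
  next
    case False
    then have "norm v > 0" by simp
    then have "norm v \<le> S * norm Q" using h by simp
    then show ?thesis by (simp add: v_def S_def)
  qed
qed

lemma final_step:
  fixes psi :: "'n::finite \<Rightarrow> 'h::real_inner" and c :: "real^'n" and B :: ereal and q :: real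
  assumes "ereal (norm c) \<le> B * ereal q" and "\<alpha> > 0"
  shows "ereal (norm (\<alpha> *\<^sub>R (\<Sum>i\<in>UNIV. c$i *\<^sub>R psi i)))
     \<le> ereal \<alpha> * ereal (sqrt (spec_norm (K_Psi psi))) * B * ereal q"
proof -
  define P where "P = sqrt (spec_norm (K_Psi psi))"
  have P0: "0 \<le> P" unfolding P_def by (simp add: spec_norm_nonneg)
  have "norm (\<alpha> *\<^sub>R (\<Sum>i\<in>UNIV. c$i *\<^sub>R psi i)) = \<alpha> * norm (\<Sum>i\<in>UNIV. c$i *\<^sub>R psi i)"
    using assms(2) by simp
  also have "\<dots> \<le> \<alpha> * (norm c * P)"
    using sum_norm_bound[of c psi] assms(2) by (simp add: P_def K_Psi_def)
  finally have "ereal (norm (\<alpha> *\<^sub>R (\<Sum>i\<in>UNIV. c$i *\<^sub>R psi i))) \<le> ereal (\<alpha> * P) * ereal (norm c)"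
    by (simp add: mult_ac)
  also have "\<dots> \<le> ereal (\<alpha> * P) * (B * ereal q)"
    by (rule ereal_mult_left_mono[OF assms(1)]) (use P0 assms(2) in simp)
  finally show ?thesis by (simp add: P_def mult_ac)
qed

theorem theorem2:
  fixes ev :: "'h::{real_inner,complete_space} \<Rightarrow> 's \<times> 'a \<Rightarrow> real"
    and phi :: "'s \<times> 'a \<Rightarrow> 'h"
    and g :: 'h and \<alpha> :: real
    and s :: "'n::finite \<Rightarrow> 's" and psi :: "'n \<Rightarrow> 'h"
  assumes "is_rkhs ev phi"
    and "\<alpha> > 0"
    and "\<forall>Q i. bdd_below (range (\<lambda>a. ev Q (s i, a)))"
  shows "\<forall>Q1 Q2 mu.
     ereal (norm (T_mu ev g \<alpha> s psi mu Q1 - T_mu ev g \<alpha> s psi mu Q2))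
        \<le> beta phi \<alpha> s psi * ereal (norm (Q1 - Q2))
   \<and> ereal (norm (T_bell ev g \<alpha> s psi Q1 - T_bell ev g \<alpha> s psi Q2))
        \<le> beta phi \<alpha> s psi * ereal (norm (Q1 - Q2))"
proof (intro allI conjI)
  note rk = assms(1)[unfolded is_rkhs_def]
  define B where "B = (SUP mu. ereal (sqrt (spec_norm (K_av phi s mu))))"
  have beta_eq: "beta phi \<alpha> s psi = ereal \<alpha> * ereal (sqrt (spec_norm (K_Psi psi))) * B"
    by (simp add: beta_def B_def)
  have evd: "ev Q1 z - ev Q2 z = inner (phi z) (Q1 - Q2)" for Q1 Q2 z
    using rk by (simp only: inner_diff_right)
  have vb: "ereal (norm (\<chi> i. inner (phi (s i, mu (s i))) Q)) \<le> ereal (sqrt (spec_norm (K_av phi s mu))) * ereal (norm Q)" 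
    for mu Q
    using vmu_bound[of phi "\<lambda>i. (s i, mu (s i))" Q] by (simp add: K_av_def rkhs_kernel_def)
  have vB: "ereal (norm (\<chi> i. inner (phi (s i, mu (s i))) Q)) \<le> B * ereal (norm Q)" for mu Q
  proof -
    have "ereal (sqrt (spec_norm (K_av phi s mu))) \<le> B" unfolding B_def by (rule SUP_upper) simp
    then have "ereal (sqrt (spec_norm (K_av phi s mu))) * ereal (norm Q) \<le> B * ereal (norm Q)"
      by (rule ereal_mult_right_mono) simp
    then show ?thesis using vb[of mu Q] by (rule order_trans[rotated])
  qed
  fix Q1 Q2 :: 'h and mu :: "'s \<Rightarrow> 'a"
  show "ereal (norm (T_mu ev g \<alpha> s psi mu Q1 - T_mu ev g \<alpha> s psi mu Q2))
        \<le> beta phi \<alpha> s psi * ereal (norm (Q1 - Q2))"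
  proof -
    define c :: "real^'n" where "c = (\<chi> i. inner (phi (s i, mu (s i))) (Q1 - Q2))"
    have "T_mu ev g \<alpha> s psi mu Q1 - T_mu ev g \<alpha> s psi mu Q2 = \<alpha> *\<^sub>R (\<Sum>i\<in>UNIV. c$i *\<^sub>R psi i)"
      by (simp add: T_mu_def c_def evd[symmetric] scaleR_diff_right[symmetric]
          sum_subtractf[symmetric] scaleR_diff_left[symmetric])
    then show ?thesis using final_step[OF vB[of mu "Q1 - Q2", folded c_def] assms(2), of psi]
      by (simp add: beta_eq)
  qed
  show "ereal (norm (T_bell ev g \<alpha> s psi Q1 - T_bell ev g \<alpha> s psi Q2))
        \<le> beta phi \<alpha> s psi * ereal (norm (Q1 - Q2))"
  proof -
    define d :: "real^'n" where "d = (\<chi> i. (INF a. ev Q1 (s i, a)) - (INF a. ev Q2 (s i, a)))"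
    have "T_bell ev g \<alpha> s psi Q1 - T_bell ev g \<alpha> s psi Q2 = \<alpha> *\<^sub>R (\<Sum>i\<in>UNIV. d$i *\<^sub>R psi i)"
      by (simp add: T_bell_def d_def scaleR_diff_right[symmetric]
          sum_subtractf[symmetric] scaleR_diff_left[symmetric])
    moreover have "ereal (norm d) \<le> B * ereal (norm (Q1 - Q2))"
    proof (rule ereal_le_epsilon2)
      fix e :: real assume e: "0 < e"
      define eps where "eps = e / (real CARD('n) + 1)"
      have eps0: "0 < eps" using e by (simp add: eps_def)
      have ceps: "real CARD('n) * eps \<le> e"
        using e by (simp add: eps_def field_simps)
      have "\<forall>x. \<exists>a. x \<in> range s \<longrightarrow> \<bar>(INF a. ev Q1 (x, a)) - (INF a. ev Q2 (x, a))\<bar>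
                  \<le> \<bar>ev Q1 (x, a) - ev Q2 (x, a)\<bar> + eps"
      proof
        fix x
        show "\<exists>a. x \<in> range s \<longrightarrow> \<bar>(INF a. ev Q1 (x, a)) - (INF a. ev Q2 (x, a))\<bar>
                  \<le> \<bar>ev Q1 (x, a) - ev Q2 (x, a)\<bar> + eps"
        proof (cases "x \<in> range s")
          case True
          then obtain i where "x = s i" by auto
          then show ?thesis
            using inf_choice[of "\<lambda>a. ev Q1 (x, a)" "\<lambda>a. ev Q2 (x, a)" eps] assms(3) eps0 by auto
        qed simp
      qed
      then obtain mu where mu: "\<And>x. x \<in> range s \<Longrightarrow> \<bar>(INF a. ev Q1 (x, a)) - (INF a. ev Q2 (x, a))\<bar>
                  \<le> \<bar>ev Q1 (x, mu x) - ev Q2 (x, mu x)\<bar> + eps"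
        by metis
      define v :: "real^'n" where "v = (\<chi> i. inner (phi (s i, mu (s i))) (Q1 - Q2))"
      have "norm d \<le> norm ((\<chi> i. \<bar>v$i\<bar>) + (\<chi> i. eps))"
        by (rule norm_le_componentwise_cart) (use mu eps0 in \<open>simp add: d_def v_def evd[symmetric]\<close>)
      also have "\<dots> \<le> norm (\<chi> i. \<bar>v$i\<bar>) + norm ((\<chi> i. eps) :: real^'n)" by (rule norm_triangle_ineq)
      also have "norm (\<chi> i. \<bar>v$i\<bar>) \<le> norm v" by (rule norm_le_componentwise_cart) simp
      also have "norm ((\<chi> i. eps) :: real^'n) \<le> e"
        using norm_le_l1_cart[of "(\<chi> i. eps) :: real^'n"] eps0 ceps by simp
      finally have "ereal (norm d) \<le> ereal (norm v) + ereal e" by simp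
      also have "\<dots> \<le> B * ereal (norm (Q1 - Q2)) + ereal e"
        by (rule add_right_mono) (use vB[of mu "Q1 - Q2"] in \<open>simp add: v_def\<close>)
      finally show "ereal (norm d) \<le> B * ereal (norm (Q1 - Q2)) + ereal e" .
    qed
    ultimately show ?thesis using final_step[of d B "norm (Q1 - Q2)" \<alpha> psi] assms(2)
      by (simp add: beta_eq)
  qed
qed

end
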